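(* Let $(\mathcal{X},d)$ be a finite metric space, $\mathcal{P}=\{P_1,\dots,P_t\}$ a partition of $\mathcal{X}$, and $b\ge 0$ an integer. For each $i\in[t]$, run the greedy (farthest-first) $k$-center procedure on $P_i$ with $k=b+1$, producing an ordered list of centers, and for $j\in[b+1]$ let $R_{i,j}$ be the first $j$ centers and $\hat c_i(j)=\mathrm{cost}(P_i,R_{i,j})$. Let $(\hat b_1,\dots,\hat b_t)$ be an optimal solution of $$\min \sum_{i=1}^t \hat c_i(b_i+1)\quad\text{subject to}\quad \sum_{i=1}^t b_i=b,\ b_i\in\{0,1,2,\dots\}\ \forall i\in[t],$$ and let $R_i=R_{i,\hat b_i+1}$ be the first $\hat b_i+1$ greedy centers of $P_i$. Then $\{R_i:i\in[t]\}$ is a feasible solution of the \textsc{BestReps} problem with objective value at most $2$ times the optimal value of \textsc{BestReps}.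
   Context: For $x\in P$ and $R\subseteq P$ nonempty, $\mathrm{cost}(P,R)=\max_{x\in P}\min_{r\in R}d(x,r)$. The \textsc{BestReps} problem with budget $b$: choose sets $R_i\subseteq P_i$, $i\in[t]$, minimizing $\sum_{i=1}^t\mathrm{cost}(P_i,R_i)$ subject to $|R_i|\ge1$ for all $i$ and $\sum_{i=1}^t(|R_i|-1)\le b$. The greedy $k$-center procedure on a set $P$: choose an arbitrary first center; at each subsequent step $j\le k$, choose as the $j$th center a point of $P$ at maximum distance from the set of the first $j-1$ centers (ties broken arbitrarily). (If $P$ has fewer than $j$ points, the first $j$ centers are understood to be all of $P$.) *)

theory Defs
  imports Complex_Main
begin

definition metric_on :: "'a set \<Rightarrow> ('a \<Rightarrow> 'a \<Rightarrow> real) \<Rightarrow> bool" where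
  "metric_on X d \<longleftrightarrow>
     (\<forall>x\<in>X. \<forall>y\<in>X. d x y \<ge> 0 \<and> (d x y = 0 \<longleftrightarrow> x = y) \<and> d x y = d y x) \<and>
     (\<forall>x\<in>X. \<forall>y\<in>X. \<forall>z\<in>X. d x z \<le> d x y + d y z)"

definition is_partition :: "'a set \<Rightarrow> nat \<Rightarrow> (nat \<Rightarrow> 'a set) \<Rightarrow> bool" where
  "is_partition X t P \<longleftrightarrow>
     (\<forall>i<t. P i \<noteq> {}) \<and> (\<forall>i<t. \<forall>j<t. i \<noteq> j \<longrightarrow> P i \<inter> P j = {}) \<and>
     (\<Union>i<t. P i) = X"

definition dist_set :: "('a \<Rightarrow> 'a \<Rightarrow> real) \<Rightarrow> 'a \<Rightarrow> 'a set \<Rightarrow> real" where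
  "dist_set d x R = Min ((\<lambda>r. d x r) ` R)"

definition cost :: "('a \<Rightarrow> 'a \<Rightarrow> real) \<Rightarrow> 'a set \<Rightarrow> 'a set \<Rightarrow> real" where
  "cost d P R = Max ((\<lambda>x. dist_set d x R) ` P)"

text \<open>cs is a possible output (ordered list of centers) of the greedy k-center procedure on P:
  arbitrary first center, each later center at maximum distance from the previous ones
  (arbitrary tie breaking); it stops after k centers or when P is exhausted.\<close>
definition greedy_centers :: "('a \<Rightarrow> 'a \<Rightarrow> real) \<Rightarrow> 'a set \<Rightarrow> nat \<Rightarrow> 'a list \<Rightarrow> bool" where
  "greedy_centers d P k cs \<longleftrightarrow>
     length cs = min k (card P) \<and> set cs \<subseteq> P \<and>
     (\<forall>j. 0 < j \<and> j < length cs \<longrightarrow>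
        (\<forall>y\<in>P. dist_set d y (set (take j cs)) \<le> dist_set d (cs ! j) (set (take j cs))))"

definition bestreps_feasible :: "nat \<Rightarrow> (nat \<Rightarrow> 'a set) \<Rightarrow> nat \<Rightarrow> (nat \<Rightarrow> 'a set) \<Rightarrow> bool" where
  "bestreps_feasible t P b R \<longleftrightarrow>
     (\<forall>i<t. R i \<subseteq> P i \<and> card (R i) \<ge> 1) \<and> (\<Sum>i<t. card (R i) - 1) \<le> b"

end

theory Submission
  imports Defs
begin

lemma m_pos: "metric_on X d \<Longrightarrow> x \<in> X \<Longrightarrow> y \<in> X \<Longrightarrow> 0 \<le> d x y"
  unfolding metric_on_def by simp
lemma m_zero: "metric_on X d \<Longrightarrow> x \<in> X \<Longrightarrow> d x x = 0"
  unfolding metric_on_def by simp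
lemma m_sym: "metric_on X d \<Longrightarrow> x \<in> X \<Longrightarrow> y \<in> X \<Longrightarrow> d x y = d y x"
  unfolding metric_on_def by simp
lemma m_tri: "metric_on X d \<Longrightarrow> x \<in> X \<Longrightarrow> y \<in> X \<Longrightarrow> z \<in> X \<Longrightarrow> d x z \<le> d x y + d y z"
  unfolding metric_on_def by simp

lemma ds_le: "finite A \<Longrightarrow> a \<in> A \<Longrightarrow> dist_set d x A \<le> d x a"
  unfolding dist_set_def by (rule Min_le) auto

lemma ds_att: "finite A \<Longrightarrow> A \<noteq> {} \<Longrightarrow> \<exists>a\<in>A. dist_set d x A = d x a"
proof -
  assume "finite A" "A \<noteq> {}"
  then have "Min ((\<lambda>r. d x r) ` A) \<in> (\<lambda>r. d x r) ` A" by (intro Min_in) auto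
  then show ?thesis unfolding dist_set_def by auto
qed

lemma ds_anti: "finite B \<Longrightarrow> A \<subseteq> B \<Longrightarrow> A \<noteq> {} \<Longrightarrow> dist_set d x B \<le> dist_set d x A"
  unfolding dist_set_def by (rule Min_antimono) auto

lemma cost_ge: "finite P \<Longrightarrow> x \<in> P \<Longrightarrow> dist_set d x R \<le> cost d P R"
  unfolding cost_def by (rule Max_ge) auto

lemma cost_att: "finite P \<Longrightarrow> P \<noteq> {} \<Longrightarrow> \<exists>x\<in>P. cost d P R = dist_set d x R"
proof -
  assume "finite P" "P \<noteq> {}"
  then have "Max ((\<lambda>x. dist_set d x R) ` P) \<in> (\<lambda>x. dist_set d x R) ` P" by (intro Max_in) auto
  then show ?thesis unfolding cost_def by auto
qed

lemma cost_anti: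
  assumes "finite P" "P \<noteq> {}" "finite B" "A \<subseteq> B" "A \<noteq> {}"
  shows "cost d P B \<le> cost d P A"
proof -
  obtain x where x: "x \<in> P" "cost d P B = dist_set d x B" using cost_att[OF assms(1,2), of d B] by blast
  have "dist_set d x B \<le> dist_set d x A" by (rule ds_anti[OF assms(3,4,5)])
  also have "\<dots> \<le> cost d P A" by (rule cost_ge[OF assms(1) x(1)])
  finally show ?thesis using x by simp
qed

lemma cost_nonneg:
  assumes "metric_on X d" "P \<subseteq> X" "finite P" "P \<noteq> {}" "R \<subseteq> P" "R \<noteq> {}"
  shows "0 \<le> cost d P R"
proof -
  obtain y where y: "y \<in> P" using assms by blast
  obtain a where a: "a \<in> R" "dist_set d y R = d y a" using ds_att[of R d y] assms finite_subset by blast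
  have "0 \<le> d y a" using m_pos[OF assms(1)] assms(2,5) a y by blast
  then show ?thesis using cost_ge[OF assms(3) y, of d R] a by simp
qed

lemma greedy_2approx:
  assumes met: "metric_on X d" and PX: "P \<subseteq> X" and fP: "finite P" and ne: "P \<noteq> {}"
    and gr: "greedy_centers d P k cs" and m1: "1 \<le> m" and mk: "m \<le> k"
    and QP: "Q \<subseteq> P" and cQ: "card Q = m"
  shows "cost d P (set (take m cs)) \<le> 2 * cost d P Q"
proof -
  define L where "L = length cs"
  have gc: "length cs = min k (card P) \<and> set cs \<subseteq> P \<and>
     (\<forall>j. 0 < j \<and> j < length cs \<longrightarrow>
        (\<forall>y\<in>P. dist_set d y (set (take j cs)) \<le> dist_set d (cs ! j) (set (take j cs))))"
    using gr unfolding greedy_centers_def .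
  have L: "L = min k (card P)" unfolding L_def using conjunct1[OF gc] .
  have csP: "set cs \<subseteq> P" using conjunct1[OF conjunct2[OF gc]] .
  have g0: "\<forall>j. 0 < j \<and> j < length cs \<longrightarrow>
        (\<forall>y\<in>P. dist_set d y (set (take j cs)) \<le> dist_set d (cs ! j) (set (take j cs)))"
    using conjunct2[OF conjunct2[OF gc]] .
  have g: "dist_set d y (set (take j cs)) \<le> dist_set d (cs ! j) (set (take j cs))"
    if "0 < j" "j < L" "y \<in> P" for j y
    using g0 that unfolding L_def by blast
  have cP: "card P \<ge> 1" using fP ne by (simp add: Suc_le_eq card_gt_0_iff)
  have fQ: "finite Q" using QP fP finite_subset by blast
  have Qne: "Q \<noteq> {}" using cQ m1 by auto
  define m' where "m' = min m L"
  have m'1: "m' \<ge> 1" using L m1 mk cP unfolding m'_def by auto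
  define C where "C = set (take m cs)"
  have fC: "finite C" unfolding C_def by simp
  have Cne: "C \<noteq> {}" using m'1 unfolding C_def m'_def L_def by (auto simp: Suc_le_eq)
  have CP: "C \<subseteq> P" using csP unfolding C_def by (meson order.trans set_take_subset)
  have inC: "cs ! i \<in> C" if im: "i < m'" for i
  proof -
    have "i < length (take m cs)" using im by (simp add: m'_def L_def)
    then have "take m cs ! i \<in> set (take m cs)" by (rule nth_mem)
    moreover have "take m cs ! i = cs ! i" using im by (simp add: m'_def)
    ultimately show ?thesis unfolding C_def by simp
  qed
  have csiP: "\<And>i. i < m' \<Longrightarrow> cs ! i \<in> P" using inC CP by blast
  obtain x where x: "x \<in> P" "cost d P C = dist_set d x C" using cost_att[OF fP ne, of d C] by blast
  define r where "r = cost d P C"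
  have c0: "0 \<le> cost d P Q" using cost_nonneg[OF met PX fP ne QP Qne] .
  show ?thesis
  proof (cases "r \<le> 0")
    case True
    then have "cost d P (set (take m cs)) \<le> 0" unfolding r_def C_def .
    then show ?thesis using c0 by linarith
  next
    case False
    then have rpos: "r > 0" by simp
    define gg where "gg i = (if i < m' then cs ! i else x)" for i
    have ggP: "\<And>i. gg i \<in> P" unfolding gg_def using csiP x by auto
    have sep1: "r \<le> d (gg j) (gg i)" if ij: "i < j" "j \<le> m'" for i j
    proof -
      have im: "i < m'" using ij by simp
      have ggi: "gg i = cs ! i" using im unfolding gg_def by simp
      show ?thesis
      proof (cases "j < m'")
        case True
        have jL: "j < L" using True unfolding m'_def by simp
        have ggj: "gg j = cs ! j" using True unfolding gg_def by simp
        have sub: "set (take j cs) \<subseteq> C" unfolding C_def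
          using True unfolding m'_def by (simp add: set_take_subset_set_take)
        have nej: "set (take j cs) \<noteq> {}" using ij jL unfolding L_def by auto
        have "r = dist_set d x C" using x r_def by simp
        also have "\<dots> \<le> dist_set d x (set (take j cs))" using ds_anti[OF fC sub nej] .
        also have "\<dots> \<le> dist_set d (cs ! j) (set (take j cs))" apply (rule g) using ij jL x by auto
        also have "\<dots> \<le> d (cs ! j) (cs ! i)"
        proof (rule ds_le)
          have "i < length (take j cs)" using ij jL by (simp add: L_def)
          then have "take j cs ! i \<in> set (take j cs)" by (rule nth_mem)
          moreover have "take j cs ! i = cs ! i" using ij by simp
          ultimately show "cs ! i \<in> set (take j cs)" by simp
        qed simp
        finally show ?thesis using ggi ggj by simp
      next
        case False
        then have ggj: "gg j = x" unfolding gg_def by simp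
        have "r = dist_set d x C" using x r_def by simp
        also have "\<dots> \<le> d x (cs ! i)" using ds_le[OF fC inC[OF im]] .
        finally show ?thesis using ggi ggj by simp
      qed
    qed
    have sym: "\<And>u v. u \<in> P \<Longrightarrow> v \<in> P \<Longrightarrow> d u v = d v u"
      by (rule m_sym[OF met]) (use PX in blast)+
    have sep: "r \<le> d (gg i) (gg j)" if "i \<le> m'" "j \<le> m'" "i \<noteq> j" for i j
    proof (cases "i < j")
      case True
      have "d (gg i) (gg j) = d (gg j) (gg i)" by (rule sym[OF ggP ggP])
      then show ?thesis using sep1[of i j] that True by simp
    next
      case False then show ?thesis using sep1[of j i] that by simp
    qed
    have noninj: "\<exists>i j. i \<le> m' \<and> j \<le> m' \<and> i \<noteq> j \<and> h (gg i) = h (gg j)"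
      if hS: "\<And>i. h (gg i) \<in> S" and fS: "finite S" and cS: "card S \<le> m'" for h :: "'a \<Rightarrow> 'a" and S
    proof (rule ccontr)
      assume "\<not> ?thesis"
      then have "inj_on (\<lambda>i. h (gg i)) {..m'}" unfolding inj_on_def by auto
      moreover have "(\<lambda>i. h (gg i)) ` {..m'} \<subseteq> S" using hS by auto
      ultimately have "card {..m'} \<le> card S" using card_inj_on_le fS by blast
      then show False using cS by simp
    qed
    show ?thesis
    proof (cases "m' < m")
      case True
      then have "m' = card P" unfolding m'_def using L mk by auto
      then obtain i j where ij: "i \<le> m'" "j \<le> m'" "i \<noteq> j" "gg i = gg j"
        using noninj[of "\<lambda>u. u" P] ggP fP by auto
      have "gg i \<in> X" using ggP PX by blast
      then have "d (gg i) (gg i) = 0" using m_zero[OF met] by blast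
      then have "d (gg i) (gg j) = 0" using ij(4) by simp
      then show ?thesis using sep[OF ij(1-3)] rpos by simp
    next
      case False
      then have mm: "m' = m" unfolding m'_def by simp
      have "\<forall>u. \<exists>a. u \<in> P \<longrightarrow> a \<in> Q \<and> dist_set d u Q = d u a"
        using ds_att[OF fQ Qne] by blast
      from choice[OF this] obtain f where f0: "\<forall>u. u \<in> P \<longrightarrow> f u \<in> Q \<and> dist_set d u Q = d u (f u)"
        by blast
      then have f: "\<And>u. u \<in> P \<Longrightarrow> f u \<in> Q \<and> dist_set d u Q = d u (f u)" by blast
      obtain i j where ij: "i \<le> m'" "j \<le> m'" "i \<noteq> j" "f (gg i) = f (gg j)"
        using noninj[of f Q] ggP f fQ cQ mm by auto
      have fiX: "f (gg i) \<in> X" using f ggP QP PX by blast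
      have "d (gg i) (gg j) \<le> d (gg i) (f (gg i)) + d (f (gg i)) (gg j)"
        by (rule m_tri[OF met]) (use PX ggP fiX in blast)+
      also have "\<dots> = d (gg i) (f (gg i)) + d (gg j) (f (gg j))"
      proof -
        have "f (gg j) \<in> P" using f ggP QP by blast
        then have "d (f (gg j)) (gg j) = d (gg j) (f (gg j))" by (rule sym[OF _ ggP])
        then show ?thesis using ij(4) by simp
      qed
      also have "\<dots> \<le> 2 * cost d P Q"
      proof -
        have e1: "dist_set d (gg i) Q = d (gg i) (f (gg i))" using f ggP by blast
        have e2: "dist_set d (gg j) Q = d (gg j) (f (gg j))" using f ggP by blast
        show ?thesis using e1 e2 cost_ge[OF fP ggP[of i], of d Q]
          cost_ge[OF fP ggP[of j], of d Q] by linarith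
      qed
      finally have "d (gg i) (gg j) \<le> 2 * cost d P Q" .
      with sep[OF ij(1-3)] have "r \<le> 2 * cost d P Q" by linarith
      then show ?thesis unfolding r_def C_def .
    qed
  qed
qed

theorem theorem3:
  fixes X :: "'a set" and d :: "'a \<Rightarrow> 'a \<Rightarrow> real" and t b :: nat
    and P :: "nat \<Rightarrow> 'a set" and cs :: "nat \<Rightarrow> 'a list" and bh :: "nat \<Rightarrow> nat"
  assumes "finite X" and "metric_on X d" and "is_partition X t P"
    and greedy: "\<forall>i<t. greedy_centers d (P i) (b + 1) (cs i)"
    and bh_feas: "(\<Sum>i<t. bh i) = b"
    and bh_opt: "\<forall>bb :: nat \<Rightarrow> nat. (\<Sum>i<t. bb i) = b \<longrightarrow>
        (\<Sum>i<t. cost d (P i) (set (take (bh i + 1) (cs i))))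
          \<le> (\<Sum>i<t. cost d (P i) (set (take (bb i + 1) (cs i))))"
  shows "bestreps_feasible t P b (\<lambda>i. set (take (bh i + 1) (cs i))) \<and>
    (\<forall>Q. bestreps_feasible t P b Q \<longrightarrow>
       (\<Sum>i<t. cost d (P i) (set (take (bh i + 1) (cs i)))) \<le> 2 * (\<Sum>i<t. cost d (P i) (Q i)))"
proof -
  have PX: "\<And>i. i < t \<Longrightarrow> P i \<subseteq> X" and Pne: "\<And>i. i < t \<Longrightarrow> P i \<noteq> {}"
    using assms(3) unfolding is_partition_def by auto
  have fP: "\<And>i. i < t \<Longrightarrow> finite (P i)" using PX assms(1) finite_subset by blast
  have gi: "\<And>i. i < t \<Longrightarrow> length (cs i) = min (b+1) (card (P i)) \<and> set (cs i) \<subseteq> P i"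
    using greedy unfolding greedy_centers_def by auto
  have csne: "\<And>i. i < t \<Longrightarrow> cs i \<noteq> []"
  proof -
    fix i assume i: "i < t"
    have "card (P i) > 0" using fP[OF i] Pne[OF i] by (simp add: card_gt_0_iff)
    then show "cs i \<noteq> []" using gi[OF i] by auto
  qed
  have feas: "bestreps_feasible t P b (\<lambda>i. set (take (bh i + 1) (cs i)))"
    unfolding bestreps_feasible_def
  proof (intro conjI allI impI)
    fix i assume i: "i < t"
    show "set (take (bh i + 1) (cs i)) \<subseteq> P i" using gi[OF i] by (meson order.trans set_take_subset)
    show "1 \<le> card (set (take (bh i + 1) (cs i)))" using csne[OF i]
      by (cases "cs i") (auto simp: Suc_le_eq card_gt_0_iff)
  next
    have "(\<Sum>i<t. card (set (take (bh i + 1) (cs i))) - 1) \<le> (\<Sum>i<t. bh i)"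
    proof (rule sum_mono)
      fix i
      have "card (set (take (bh i + 1) (cs i))) \<le> length (take (bh i + 1) (cs i))"
        by (rule card_length)
      moreover have "length (take (bh i + 1) (cs i)) \<le> bh i + 1" by simp
      ultimately show "card (set (take (bh i + 1) (cs i))) - 1 \<le> bh i" by linarith
    qed
    then show "(\<Sum>i<t. card (set (take (bh i + 1) (cs i))) - 1) \<le> b" using bh_feas by simp
  qed
  have opt: "(\<Sum>i<t. cost d (P i) (set (take (bh i + 1) (cs i)))) \<le> 2 * (\<Sum>i<t. cost d (P i) (Q i))"
    if Q: "bestreps_feasible t P b Q" for Q
  proof (cases "t = 0")
    case True then show ?thesis by simp
  next
    case False
    define q where "q i = card (Q i) - 1" for i
    have Qi: "\<And>i. i < t \<Longrightarrow> Q i \<subseteq> P i \<and> card (Q i) \<ge> 1" and sq: "(\<Sum>i<t. q i) \<le> b"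
      using Q unfolding bestreps_feasible_def q_def by auto
    define bb where "bb i = (if i = 0 then q i + (b - (\<Sum>i<t. q i)) else q i)" for i
    have "(\<Sum>i<t. bb i) = (\<Sum>i<t. q i + (if i = 0 then b - (\<Sum>i<t. q i) else 0))"
      unfolding bb_def by (intro sum.cong) auto
    also have "\<dots> = (\<Sum>i<t. q i) + (b - (\<Sum>i<t. q i))"
      using False by (simp add: sum.distrib)
    also have "\<dots> = b" using sq by simp
    finally have sbb: "(\<Sum>i<t. bb i) = b" .
    have qle: "q i \<le> b" if "i < t" for i
    proof -
      have "q i \<le> (\<Sum>i<t. q i)" using that by (intro member_le_sum) auto
      then show ?thesis using sq by linarith
    qed
    have "(\<Sum>i<t. cost d (P i) (set (take (bh i + 1) (cs i))))
        \<le> (\<Sum>i<t. cost d (P i) (set (take (bb i + 1) (cs i))))" using bh_opt sbb by blast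
    also have "\<dots> \<le> (\<Sum>i<t. 2 * cost d (P i) (Q i))"
    proof (rule sum_mono)
      fix i assume "i \<in> {..<t}"
      then have i: "i < t" by simp
      have "cost d (P i) (set (take (bb i + 1) (cs i))) \<le> cost d (P i) (set (take (q i + 1) (cs i)))"
        apply (rule cost_anti[OF fP[OF i] Pne[OF i]])
          apply simp
         apply (simp add: set_take_subset_set_take bb_def)
        using csne[OF i] by (cases "cs i") auto
      also have "\<dots> \<le> 2 * cost d (P i) (Q i)"
        apply (rule greedy_2approx[OF assms(2) PX[OF i] fP[OF i] Pne[OF i], of "b+1" "cs i" "q i + 1"])
        using greedy i qle[OF i] Qi[OF i] unfolding q_def by auto
      finally show "cost d (P i) (set (take (bb i + 1) (cs i))) \<le> 2 * cost d (P i) (Q i)" .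
    qed
    also have "\<dots> = 2 * (\<Sum>i<t. cost d (P i) (Q i))" by (simp add: sum_distrib_left)
    finally show ?thesis .
  qed
  show ?thesis using feas opt by blast
qed

end
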